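(* Let $Q$ be a right Leibniz algebra over a field $\mathbb{F}$ and let $L$ be a subalgebra of $Q$. Then $Q$ is an algebra of quotients of $L$ if and only if $Q$ is ideally absorbed into $L$.
   Context: A right Leibniz algebra is a vector space with a bilinear bracket satisfying $[x,[y,z]]=[[x,y],z]-[[x,z],y]$ for all $x,y,z$. An ideal $I$ of $L$ is a subspace with $[I,L]\subseteq I$ and $[L,I]\subseteq I$. For $H\subseteq L$, $\mathrm{Ann}_L(H)=\{x\in L: [x,y]=[y,x]=0\ \forall y\in H\}$. For $x\in L$ let $R_x,L_x$ be the operators on $Q$ given by $R_x(u)=[u,x]$, $L_x(u)=[x,u]$, and let $\mathscr{A}(L)$ be the associative algebra (under composition) generated by $\{R_x,L_y: x,y\in L\}$. For $q\in Q$ put ${}_L(q)=\mathbb{F}q+\{\sum_{i=1}^n\xi_i(q): \xi_i\in\mathscr{A}(L), n\in\mathbb{N}\}$ and $(L:q)=\{x\in L: [x,{}_L(q)]\subseteq L,\ [{}_L(q),x]\subseteq L\}$. $Q$ is an algebra of quotients of $L$ if for all $p,q\in Q$ with $p\neq 0$ there exists $x\in(L:q)$ with $[x,p]\neq 0$, or there exists $y\in (L:q)$ with $[p,y]\neq0$. $Q$ is ideally absorbed into $L$ if for each $0\neq q\in Q$ there exists an ideal $I$ of $L$ with $\mathrm{Ann}_L(I)=\{0\}$ such that $[I,q]\neq\{0\}$ or $[q,I]\neq\{0\}$, and both $[I,q]\subseteq L$ and $[q,I]\subseteq L$. *)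

theory Defs
  imports Main "HOL.Vector_Spaces"
begin

text \<open>The ambient algebra Q is the whole type 'q.\<close>

definition right_leibniz_algebra ::
  "('f::field \<Rightarrow> 'q::ab_group_add \<Rightarrow> 'q) \<Rightarrow> ('q \<Rightarrow> 'q \<Rightarrow> 'q) \<Rightarrow> bool" where
  "right_leibniz_algebra sc br \<longleftrightarrow>
     vector_space sc \<and>
     (\<forall>x y z. br (x + y) z = br x z + br y z) \<and>
     (\<forall>x y z. br x (y + z) = br x y + br x z) \<and>
     (\<forall>c x y. br (sc c x) y = sc c (br x y)) \<and>
     (\<forall>c x y. br x (sc c y) = sc c (br x y)) \<and>
     (\<forall>x y z. br x (br y z) = br (br x y) z - br (br x z) y)"

definition subalgebra ::
  "('f::field \<Rightarrow> 'q::ab_group_add \<Rightarrow> 'q) \<Rightarrow> ('q \<Rightarrow> 'q \<Rightarrow> 'q) \<Rightarrow> 'q set \<Rightarrow> bool" where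
  "subalgebra sc br L \<longleftrightarrow> module.subspace sc L \<and> (\<forall>x\<in>L. \<forall>y\<in>L. br x y \<in> L)"

definition is_ideal ::
  "('f::field \<Rightarrow> 'q::ab_group_add \<Rightarrow> 'q) \<Rightarrow> ('q \<Rightarrow> 'q \<Rightarrow> 'q) \<Rightarrow> 'q set \<Rightarrow> 'q set \<Rightarrow> bool" where
  "is_ideal sc br L I \<longleftrightarrow> module.subspace sc I \<and> I \<subseteq> L \<and>
     (\<forall>i\<in>I. \<forall>x\<in>L. br i x \<in> I \<and> br x i \<in> I)"

definition Ann :: "('q::zero \<Rightarrow> 'q \<Rightarrow> 'q) \<Rightarrow> 'q set \<Rightarrow> 'q set \<Rightarrow> 'q set" where
  "Ann br L H = {x\<in>L. \<forall>y\<in>H. br x y = 0 \<and> br y x = 0}"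

inductive_set opalg ::
  "('f::field \<Rightarrow> 'q::ab_group_add \<Rightarrow> 'q) \<Rightarrow> ('q \<Rightarrow> 'q \<Rightarrow> 'q) \<Rightarrow> 'q set \<Rightarrow> ('q \<Rightarrow> 'q) set"
  for sc br L where
  R_gen: "x \<in> L \<Longrightarrow> (\<lambda>u. br u x) \<in> opalg sc br L"
| L_gen: "y \<in> L \<Longrightarrow> (\<lambda>u. br y u) \<in> opalg sc br L"
| comp: "f \<in> opalg sc br L \<Longrightarrow> g \<in> opalg sc br L \<Longrightarrow> f \<circ> g \<in> opalg sc br L"
| add: "f \<in> opalg sc br L \<Longrightarrow> g \<in> opalg sc br L \<Longrightarrow> (\<lambda>u. f u + g u) \<in> opalg sc br L"
| smult: "f \<in> opalg sc br L \<Longrightarrow> (\<lambda>u. sc c (f u)) \<in> opalg sc br L"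

definition gen_set ::
  "('f::field \<Rightarrow> 'q::ab_group_add \<Rightarrow> 'q) \<Rightarrow> ('q \<Rightarrow> 'q \<Rightarrow> 'q) \<Rightarrow> 'q set \<Rightarrow> 'q \<Rightarrow> 'q set" where
  "gen_set sc br L q = {sc c q + (\<Sum>i<n. \<xi> i q) | c (n::nat) \<xi>. \<forall>i<n. \<xi> i \<in> opalg sc br L}"

definition colon ::
  "('f::field \<Rightarrow> 'q::ab_group_add \<Rightarrow> 'q) \<Rightarrow> ('q \<Rightarrow> 'q \<Rightarrow> 'q) \<Rightarrow> 'q set \<Rightarrow> 'q \<Rightarrow> 'q set" where
  "colon sc br L q = {x\<in>L. \<forall>u\<in>gen_set sc br L q. br x u \<in> L \<and> br u x \<in> L}"

definition algebra_of_quotients ::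
  "('f::field \<Rightarrow> 'q::ab_group_add \<Rightarrow> 'q) \<Rightarrow> ('q \<Rightarrow> 'q \<Rightarrow> 'q) \<Rightarrow> 'q set \<Rightarrow> bool" where
  "algebra_of_quotients sc br L \<longleftrightarrow>
     (\<forall>p q. p \<noteq> 0 \<longrightarrow>
        (\<exists>x\<in>colon sc br L q. br x p \<noteq> 0) \<or> (\<exists>y\<in>colon sc br L q. br p y \<noteq> 0))"

definition ideally_absorbed ::
  "('f::field \<Rightarrow> 'q::ab_group_add \<Rightarrow> 'q) \<Rightarrow> ('q \<Rightarrow> 'q \<Rightarrow> 'q) \<Rightarrow> 'q set \<Rightarrow> bool" where
  "ideally_absorbed sc br L \<longleftrightarrow>
     (\<forall>q. q \<noteq> 0 \<longrightarrow>
        (\<exists>I. is_ideal sc br L I \<and> Ann br L I = {0} \<and>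
             ((\<lambda>i. br i q) ` I \<noteq> {0} \<or> (\<lambda>i. br q i) ` I \<noteq> {0}) \<and>
             (\<lambda>i. br i q) ` I \<subseteq> L \<and> (\<lambda>i. br q i) ` I \<subseteq> L))"

end

theory Submission
  imports Defs
begin

locale RLA =
  fixes sc :: "'f::field \<Rightarrow> 'q::ab_group_add \<Rightarrow> 'q"
    and br :: "'q \<Rightarrow> 'q \<Rightarrow> 'q"
    and L :: "'q set"
  assumes RL: "right_leibniz_algebra sc br"
    and SA: "subalgebra sc br L"
begin

lemma VS: "vector_space sc" using RL unfolding right_leibniz_algebra_def by blast

interpretation V: vector_space sc by (rule VS)

lemma addl: "br (x + y) z = br x z + br y z" using RL unfolding right_leibniz_algebra_def by blast
lemma addr: "br x (y + z) = br x y + br x z" using RL unfolding right_leibniz_algebra_def by blast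
lemma scl: "br (sc c x) y = sc c (br x y)" using RL unfolding right_leibniz_algebra_def by blast
lemma scr: "br x (sc c y) = sc c (br x y)" using RL unfolding right_leibniz_algebra_def by blast
lemma jac: "br x (br y z) = br (br x y) z - br (br x z) y" using RL unfolding right_leibniz_algebra_def by blast

lemma br0l[simp]: "br 0 y = 0"
  using addl[of 0 0 y] by simp
lemma br0r[simp]: "br x 0 = 0"
  using addr[of x 0 0] by simp

lemma LS: "V.subspace L" using SA unfolding subalgebra_def by blast
lemma Lbr: "x \<in> L \<Longrightarrow> y \<in> L \<Longrightarrow> br x y \<in> L" using SA unfolding subalgebra_def by blast
lemma L0: "0 \<in> L" using LS V.subspace_0 by blast
lemma Ladd: "x \<in> L \<Longrightarrow> y \<in> L \<Longrightarrow> x + y \<in> L" using LS V.subspace_add by blast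
lemma Ldiff: "x \<in> L \<Longrightarrow> y \<in> L \<Longrightarrow> x - y \<in> L" using LS V.subspace_diff by blast
lemma Lsc: "x \<in> L \<Longrightarrow> sc c x \<in> L" using LS V.subspace_scale by blast

lemma jac1: "br (br x y) z = br x (br y z) + br (br x z) y"
  using jac[of x y z] by (simp add: algebra_simps)

definition S :: "'q set \<Rightarrow> 'q set" where
  "S I = {u. \<forall>i\<in>I. br i u \<in> L \<and> br u i \<in> L}"

lemma S_add: "u \<in> S I \<Longrightarrow> v \<in> S I \<Longrightarrow> u + v \<in> S I"
  unfolding S_def by (auto simp: addl addr intro!: Ladd)

lemma S_sc: "u \<in> S I \<Longrightarrow> sc c u \<in> S I"
  unfolding S_def by (auto simp: scl scr intro!: Lsc)

lemma S_R:
  assumes I: "is_ideal sc br L I" and u: "u \<in> S I" and l: "l \<in> L"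
  shows "br u l \<in> S I"
  unfolding S_def
proof (intro CollectI ballI conjI)
  fix i assume i: "i \<in> I"
  have iL: "i \<in> L" and il: "br i l \<in> I" and li: "br l i \<in> I"
    using I i l unfolding is_ideal_def by auto
  have "br i (br u l) = br (br i u) l - br (br i l) u" by (rule jac)
  moreover have "br (br i u) l \<in> L" using u i l Lbr unfolding S_def by blast
  moreover have "br (br i l) u \<in> L" using u il unfolding S_def by blast
  ultimately show "br i (br u l) \<in> L" using Ldiff by simp
  have "br (br u l) i = br u (br l i) + br (br u i) l" by (rule jac1)
  moreover have "br u (br l i) \<in> L" using u li unfolding S_def by blast
  moreover have "br (br u i) l \<in> L" using u i l Lbr unfolding S_def by blast
  ultimately show "br (br u l) i \<in> L" using Ladd by simp
qed

lemma S_L: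
  assumes I: "is_ideal sc br L I" and u: "u \<in> S I" and l: "l \<in> L"
  shows "br l u \<in> S I"
  unfolding S_def
proof (intro CollectI ballI conjI)
  fix i assume i: "i \<in> I"
  have iL: "i \<in> L" and il: "br i l \<in> I" and li: "br l i \<in> I"
    using I i l unfolding is_ideal_def by auto
  have "br i (br l u) = br (br i l) u - br (br i u) l" by (rule jac)
  moreover have "br (br i u) l \<in> L" using u i l Lbr unfolding S_def by blast
  moreover have "br (br i l) u \<in> L" using u il unfolding S_def by blast
  ultimately show "br i (br l u) \<in> L" using Ldiff by simp
  have "br (br l u) i = br l (br u i) + br (br l i) u" by (rule jac1)
  moreover have "br l (br u i) \<in> L" using u i l Lbr unfolding S_def by blast
  moreover have "br (br l i) u \<in> L" using u li unfolding S_def by blast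
  ultimately show "br (br l u) i \<in> L" using Ladd by simp
qed

lemma opalg_S:
  assumes I: "is_ideal sc br L I" and xi: "\<xi> \<in> opalg sc br L"
  shows "u \<in> S I \<Longrightarrow> \<xi> u \<in> S I"
  using xi
proof (induction arbitrary: u rule: opalg.induct)
  case (R_gen x) then show ?case using S_R[OF I] by blast
next
  case (L_gen y) then show ?case using S_L[OF I] by blast
next
  case (comp f g) then show ?case by simp
next
  case (add f g) then show ?case using S_add by blast
next
  case (smult f c) then show ?case using S_sc by blast
qed

lemma sum_S: "u \<in> S I \<Longrightarrow> (\<forall>i<(n::nat). \<xi> i \<in> opalg sc br L) \<Longrightarrow> is_ideal sc br L I
   \<Longrightarrow> (\<Sum>i<n. \<xi> i u) \<in> S I"
proof (induction n)
  case 0 then show ?case by (simp add: S_def L0)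
next
  case (Suc n) then show ?case using opalg_S S_add by simp
qed

lemma ideal_colon:
  assumes I: "is_ideal sc br L I" and q: "q \<in> S I"
  shows "I \<subseteq> colon sc br L q"
proof
  fix x assume x: "x \<in> I"
  have "gen_set sc br L q \<subseteq> S I"
  proof
    fix u assume "u \<in> gen_set sc br L q"
    then obtain c \<xi> and n :: nat where u: "u = sc c q + (\<Sum>i<n. \<xi> i q)" and xi: "\<forall>i<n. \<xi> i \<in> opalg sc br L"
      unfolding gen_set_def by blast
    have a: "sc c q \<in> S I" using q by (rule S_sc)
    have b: "(\<Sum>i<n. \<xi> i q) \<in> S I" using sum_S[OF q xi I] .
    show "u \<in> S I" unfolding u using a b by (rule S_add)
  qed
  then show "x \<in> colon sc br L q" using x I unfolding colon_def S_def is_ideal_def by blast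
qed

lemma opalg_zero: "(\<lambda>u. 0) \<in> opalg sc br L"
proof -
  have "(\<lambda>u. br u 0) \<in> opalg sc br L" using L0 by (rule opalg.R_gen)
  then show ?thesis by simp
qed

lemma sum_opalg: "(\<forall>i<(n::nat). \<xi> i \<in> opalg sc br L) \<Longrightarrow> (\<lambda>q. \<Sum>i<n. \<xi> i q) \<in> opalg sc br L"
proof (induction n)
  case 0 then show ?case using opalg_zero by simp
next
  case (Suc n)
  then have m: "(\<lambda>u. (\<lambda>q. \<Sum>i<n. \<xi> i q) u + \<xi> n u) \<in> opalg sc br L"
    by (intro opalg.add) auto
  then show ?case by simp
qed

lemma gen_set_char: "u \<in> gen_set sc br L q \<Longrightarrow> \<exists>c. \<exists>\<eta>\<in>opalg sc br L. u = sc c q + \<eta> q"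
proof -
  assume "u \<in> gen_set sc br L q"
  then obtain c \<xi> and n :: nat where u: "u = sc c q + (\<Sum>i<n. \<xi> i q)" and xi: "\<forall>i<n. \<xi> i \<in> opalg sc br L"
    unfolding gen_set_def by blast
  have "(\<lambda>q. \<Sum>i<n. \<xi> i q) \<in> opalg sc br L" using sum_opalg[OF xi] .
  then show ?thesis using u by (intro exI[of _ c] bexI[of _ "\<lambda>q. \<Sum>i<n. \<xi> i q"]) auto
qed

lemma gen_set_intro: "\<eta> \<in> opalg sc br L \<Longrightarrow> sc c q + \<eta> q \<in> gen_set sc br L q"
  unfolding gen_set_def
  by (rule CollectI, rule exI[of _ c], rule exI[of _ 1], rule exI[of _ "\<lambda>_. \<eta>"]) simp

lemma q_gen: "q \<in> gen_set sc br L q"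
  using gen_set_intro[OF opalg_zero, of 1 q] by simp

lemma gen_L:
  assumes u: "u \<in> gen_set sc br L q" and l: "l \<in> L"
  shows "br l u \<in> gen_set sc br L q"
proof -
  obtain c \<eta> where e: "\<eta> \<in> opalg sc br L" "u = sc c q + \<eta> q" using gen_set_char[OF u] by blast
  have "(\<lambda>u. br l u) \<in> opalg sc br L" using l by (rule opalg.L_gen)
  then have A: "(\<lambda>u. sc c (br l u)) \<in> opalg sc br L" by (rule opalg.smult)
  have B: "(\<lambda>u. br l u) \<circ> \<eta> \<in> opalg sc br L" using l e by (intro opalg.comp opalg.L_gen)
  have "(\<lambda>u. sc c (br l u) + ((\<lambda>u. br l u) \<circ> \<eta>) u) \<in> opalg sc br L" using A B by (rule opalg.add)
  from gen_set_intro[OF this, of 0 q] show ?thesis using e by (simp add: addr scr)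
qed

lemma gen_R:
  assumes u: "u \<in> gen_set sc br L q" and l: "l \<in> L"
  shows "br u l \<in> gen_set sc br L q"
proof -
  obtain c \<eta> where e: "\<eta> \<in> opalg sc br L" "u = sc c q + \<eta> q" using gen_set_char[OF u] by blast
  have "(\<lambda>u. br u l) \<in> opalg sc br L" using l by (rule opalg.R_gen)
  then have A: "(\<lambda>u. sc c (br u l)) \<in> opalg sc br L" by (rule opalg.smult)
  have B: "(\<lambda>u. br u l) \<circ> \<eta> \<in> opalg sc br L" using l e by (intro opalg.comp opalg.R_gen)
  have "(\<lambda>u. sc c (br u l) + ((\<lambda>u. br u l) \<circ> \<eta>) u) \<in> opalg sc br L" using A B by (rule opalg.add)
  from gen_set_intro[OF this, of 0 q] show ?thesis using e by (simp add: addl scl)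
qed

lemma colon_ideal: "is_ideal sc br L (colon sc br L q)"
  unfolding is_ideal_def
proof (intro conjI ballI)
  show "V.subspace (colon sc br L q)"
    unfolding V.subspace_def colon_def
    by (auto simp: L0 addl scl addr scr intro!: Ladd Lsc)
  show "colon sc br L q \<subseteq> L" unfolding colon_def by blast
next
  fix x l assume x: "x \<in> colon sc br L q" and l: "l \<in> L"
  have xL: "x \<in> L" using x unfolding colon_def by blast
  have xu: "\<And>u. u \<in> gen_set sc br L q \<Longrightarrow> br x u \<in> L \<and> br u x \<in> L"
    using x unfolding colon_def by blast
  show "br x l \<in> colon sc br L q" unfolding colon_def
  proof (intro CollectI conjI ballI)
    show "br x l \<in> L" using xL l Lbr by blast
    fix u assume u: "u \<in> gen_set sc br L q"
    have "br (br x l) u = br x (br l u) + br (br x u) l" by (rule jac1)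
    then show "br (br x l) u \<in> L" using xu[OF u] xu[OF gen_L[OF u l]] l Lbr Ladd by simp
    have "br u (br x l) = br (br u x) l - br (br u l) x" by (rule jac)
    then show "br u (br x l) \<in> L" using xu[OF u] xu[OF gen_R[OF u l]] l Lbr Ldiff by simp
  qed
  show "br l x \<in> colon sc br L q" unfolding colon_def
  proof (intro CollectI conjI ballI)
    show "br l x \<in> L" using xL l Lbr by blast
    fix u assume u: "u \<in> gen_set sc br L q"
    have "br (br l x) u = br l (br x u) + br (br l u) x" by (rule jac1)
    then show "br (br l x) u \<in> L" using xu[OF u] xu[OF gen_L[OF u l]] l Lbr Ladd by simp
    have "br u (br l x) = br (br u l) x - br (br u x) l" by (rule jac)
    then show "br u (br l x) \<in> L" using xu[OF u] xu[OF gen_R[OF u l]] l Lbr Ldiff by simp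
  qed
qed

lemma forward:
  assumes AQ: "algebra_of_quotients sc br L"
  shows "ideally_absorbed sc br L"
  unfolding ideally_absorbed_def
proof (intro allI impI)
  fix q :: 'q assume q: "q \<noteq> 0"
  let ?I = "colon sc br L q"
  have ann: "Ann br L ?I = {0}"
  proof
    show "{0} \<subseteq> Ann br L ?I" unfolding Ann_def using L0 by simp
    show "Ann br L ?I \<subseteq> {0}"
    proof
      fix p assume p: "p \<in> Ann br L ?I"
      show "p \<in> {0}"
      proof (rule ccontr)
        assume "p \<notin> {0}"
        then have "p \<noteq> 0" by simp
        then have "(\<exists>x\<in>?I. br x p \<noteq> 0) \<or> (\<exists>y\<in>?I. br p y \<noteq> 0)"
          using AQ unfolding algebra_of_quotients_def by blast
        moreover have "\<forall>y\<in>?I. br p y = 0 \<and> br y p = 0" using p unfolding Ann_def by blast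
        ultimately show False by blast
      qed
    qed
  qed
  have "(\<exists>x\<in>?I. br x q \<noteq> 0) \<or> (\<exists>y\<in>?I. br q y \<noteq> 0)"
    using AQ q unfolding algebra_of_quotients_def by blast
  then have nz: "(\<lambda>i. br i q) ` ?I \<noteq> {0} \<or> (\<lambda>i. br q i) ` ?I \<noteq> {0}"
    by auto
  have sub: "(\<lambda>i. br i q) ` ?I \<subseteq> L \<and> (\<lambda>i. br q i) ` ?I \<subseteq> L"
    using q_gen[of q] unfolding colon_def by auto
  show "\<exists>I. is_ideal sc br L I \<and> Ann br L I = {0} \<and>
             ((\<lambda>i. br i q) ` I \<noteq> {0} \<or> (\<lambda>i. br q i) ` I \<noteq> {0}) \<and>
             (\<lambda>i. br i q) ` I \<subseteq> L \<and> (\<lambda>i. br q i) ` I \<subseteq> L"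
    using colon_ideal[of q] ann nz sub by (intro exI[of _ ?I]) simp
qed

lemma backward:
  assumes IA: "ideally_absorbed sc br L"
  shows "algebra_of_quotients sc br L"
  unfolding algebra_of_quotients_def
proof (intro allI impI)
  fix p q :: 'q assume p: "p \<noteq> 0"
  show "(\<exists>x\<in>colon sc br L q. br x p \<noteq> 0) \<or> (\<exists>y\<in>colon sc br L q. br p y \<noteq> 0)"
  proof (rule ccontr)
    assume "\<not> ?thesis"
    then have C: "\<forall>x\<in>colon sc br L q. br x p = 0 \<and> br p x = 0" by blast
    obtain Ip where Ip: "is_ideal sc br L Ip"
      and nzp: "(\<lambda>i. br i p) ` Ip \<noteq> {0} \<or> (\<lambda>i. br p i) ` Ip \<noteq> {0}"
      and subp: "(\<lambda>i. br i p) ` Ip \<subseteq> L" "(\<lambda>i. br p i) ` Ip \<subseteq> L"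
      using IA p unfolding ideally_absorbed_def by metis
    have IpL: "Ip \<subseteq> L" using Ip unfolding is_ideal_def by blast
    have "0 \<in> Ip" using Ip V.subspace_0 unfolding is_ideal_def by blast
    then have z: "br 0 p \<in> (\<lambda>i. br i p) ` Ip" "br p 0 \<in> (\<lambda>i. br p i) ` Ip" by blast+
    then have z': "0 \<in> (\<lambda>i. br i p) ` Ip" "0 \<in> (\<lambda>i. br p i) ` Ip" by simp_all
    have "\<exists>i\<in>Ip. br i p \<noteq> 0 \<or> br p i \<noteq> 0"
    proof (rule ccontr)
      assume "\<not> ?thesis"
      then have "(\<lambda>i. br i p) ` Ip \<subseteq> {0}" "(\<lambda>i. br p i) ` Ip \<subseteq> {0}" by auto
      then show False using nzp z' by blast
    qed
    then obtain i where i: "i \<in> Ip" and inz: "br i p \<noteq> 0 \<or> br p i \<noteq> 0" by blast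
    show False
    proof (cases "q = 0")
      case True
      have "0 \<in> S Ip" unfolding S_def using L0 by simp
      then have "Ip \<subseteq> colon sc br L q" using ideal_colon[OF Ip] True by simp
      then have "br i p = 0 \<and> br p i = 0" using C i by blast
      then show False using inz by simp
    next
      case False
      obtain J where J: "is_ideal sc br L J" and annJ: "Ann br L J = {0}"
        and subq: "(\<lambda>i. br i q) ` J \<subseteq> L" "(\<lambda>i. br q i) ` J \<subseteq> L"
        using IA False unfolding ideally_absorbed_def by metis
      have "q \<in> S J" unfolding S_def using subq by blast
      then have "J \<subseteq> colon sc br L q" using ideal_colon[OF J] by simp
      then have CJ: "\<And>j. j \<in> J \<Longrightarrow> br j p = 0 \<and> br p j = 0" using C by blast
      have iL: "i \<in> L" using i IpL by blast
      have Jij: "\<And>j. j \<in> J \<Longrightarrow> br j i \<in> J \<and> br i j \<in> J" using J iL unfolding is_ideal_def by blast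
      have notann: "\<And>a. a \<in> L \<Longrightarrow> a \<noteq> 0 \<Longrightarrow> \<exists>j\<in>J. br a j \<noteq> 0 \<or> br j a \<noteq> 0"
        using annJ unfolding Ann_def by blast
      show False
      proof (cases "br i p \<noteq> 0")
        case True
        have aL: "br i p \<in> L" using subp i by blast
        obtain j where j: "j \<in> J" and jnz: "br (br i p) j \<noteq> 0 \<or> br j (br i p) \<noteq> 0"
          using notann[OF aL True] by blast
        have e1: "br j (br i p) = br (br j i) p - br (br j p) i" by (rule jac)
        have e2: "br (br i p) j = br i (br p j) + br (br i j) p" by (rule jac1)
        have z1: "br (br j i) p = 0" using CJ Jij[OF j] by blast
        have z2: "br (br i j) p = 0" using CJ Jij[OF j] by blast
        have z3: "br j p = 0" "br p j = 0" using CJ[OF j] by auto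
        show False using e1 e2 jnz z1 z2 z3 by simp
      next
        case False
        then have nz2: "br p i \<noteq> 0" using inz by blast
        have aL: "br p i \<in> L" using subp i by blast
        obtain j where j: "j \<in> J" and jnz: "br (br p i) j \<noteq> 0 \<or> br j (br p i) \<noteq> 0"
          using notann[OF aL nz2] by blast
        have e1: "br j (br p i) = br (br j p) i - br (br j i) p" by (rule jac)
        have e2: "br (br p i) j = br p (br i j) + br (br p j) i" by (rule jac1)
        have z1: "br p (br i j) = 0" using CJ Jij[OF j] by blast
        have z2: "br (br j i) p = 0" using CJ Jij[OF j] by blast
        have z3: "br j p = 0" "br p j = 0" using CJ[OF j] by auto
        show False using e1 e2 jnz z1 z2 z3 by simp
      qed
    qed
  qed
qed

end

theorem theorem3p10:
  fixes sc :: "'f::field \<Rightarrow> 'q::ab_group_add \<Rightarrow> 'q"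
    and br :: "'q \<Rightarrow> 'q \<Rightarrow> 'q"
    and L :: "'q set"
  assumes "right_leibniz_algebra sc br"
    and "subalgebra sc br L"
  shows "algebra_of_quotients sc br L \<longleftrightarrow> ideally_absorbed sc br L"
proof -
  interpret RLA sc br L using assms by unfold_locales
  show ?thesis using forward backward by blast
qed

end
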